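(* Let $M$ be a monoid in $\mathcal{C}$ and let $V=\mathbb{R}\otimes_\mathbb{Z}\mathrm{gp}(M)$. The following are equivalent: (a) $M$ is a UFM; (b) every face submonoid of $M$ is a UFM; (c) $|\mathcal{A}(M)|=\dim\mathsf{cone}_V(M)$.
   Context: Convention: all monoids are commutative, cancellative, and reduced (only invertible element $0$), written additively; $M^\bullet=M\setminus\{0\}$; atoms $\mathcal{A}(M)=M^\bullet\setminus(M^\bullet+M^\bullet)$. $\mathcal{C}$ is the class of monoids isomorphic to a submonoid of a free commutative monoid of finite rank (equivalently, of $(\mathbb{N}^d,+)$). $M$ is regarded as a submonoid of $V=\mathbb{R}\otimes_\mathbb{Z}\mathrm{gp}(M)$ via $M\hookrightarrow\mathrm{gp}(M)\hookrightarrow V$; $\mathsf{cone}_V(M)$ is the set of finite nonnegative real linear combinations of elements of $M$, and its dimension is that of its linear span. A face of a cone $C$ is a cone $F\subseteq C$ such that whenever $x,y\in C$ and $F$ meets the open segment $\{tx+(1-t)y:0<t<1\}$, then $x,y\in F$. A face submonoid of $M$ is a submonoid $M\cap F$ with $F$ a face of $\mathsf{cone}_V(M)$. A monoid is a UFM (unique factorization monoid) if every element is a sum of atoms and this sum is unique up to order (equivalently, every nonzero element is a sum of prime elements). *)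

theory Defs
  imports "HOL-Analysis.Analysis" "HOL-Library.Multiset"
begin

text \<open>Monoids in class C are modelled (up to isomorphism) as submonoids of
  the free commutative monoid nat^'n of finite rank CARD('n).\<close>

definition submonoid_nat :: "(nat^'n::finite) set \<Rightarrow> bool" where
  "submonoid_nat M \<longleftrightarrow> 0 \<in> M \<and> (\<forall>a\<in>M. \<forall>b\<in>M. a + b \<in> M)"

definition atoms :: "(nat^'n::finite) set \<Rightarrow> (nat^'n) set" where
  "atoms M = {a \<in> M. a \<noteq> 0 \<and>
      \<not> (\<exists>b\<in>M. \<exists>c\<in>M. b \<noteq> 0 \<and> c \<noteq> 0 \<and> a = b + c)}"

definition is_UFM :: "(nat^'n::finite) set \<Rightarrow> bool" where
  "is_UFM M \<longleftrightarrow> (\<forall>x\<in>M. \<exists>!A. set_mset A \<subseteq> atoms M \<and> sum_mset A = x)"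

text \<open>Embedding of nat^n into real^n; the real span of the image of M is
  canonically R (x)_Z gp(M).\<close>
definition embR :: "nat^'n::finite \<Rightarrow> real^'n" where
  "embR x = (\<chi> i. real (x $ i))"

definition real_cone :: "'a::real_vector set \<Rightarrow> 'a set" where
  "real_cone S = {y. \<exists>F c. finite F \<and> F \<subseteq> S \<and> (\<forall>x\<in>F. 0 \<le> c x) \<and>
                          y = (\<Sum>x\<in>F. c x *\<^sub>R x)}"

definition monoid_cone :: "(nat^'n::finite) set \<Rightarrow> (real^'n) set" where
  "monoid_cone M = real_cone (embR ` M)"

definition face_of_cone :: "'a::real_vector set \<Rightarrow> 'a set \<Rightarrow> bool" where
  "face_of_cone F C \<longleftrightarrow> F \<subseteq> C \<and> real_cone F = F \<and>
     (\<forall>x\<in>C. \<forall>y\<in>C. (\<exists>t. 0 < t \<and> t < 1 \<and> t *\<^sub>R x + (1 - t) *\<^sub>R y \<in> F)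
        \<longrightarrow> x \<in> F \<and> y \<in> F)"

definition face_submonoids :: "(nat^'n::finite) set \<Rightarrow> (nat^'n) set set" where
  "face_submonoids M = {{m \<in> M. embR m \<in> F} | F. face_of_cone F (monoid_cone M)}"

end

theory Submission
  imports Defs
begin

lemma int_dep:
  fixes v :: "'a \<Rightarrow> 'b \<Rightarrow> int" and u :: "'a \<Rightarrow> real"
  assumes "finite I" "finite S" "\<forall>i\<in>I. (\<Sum>j\<in>S. u j * real_of_int (v j i)) = 0" "\<exists>j\<in>S. u j \<noteq> 0"
  shows "\<exists>z::'a\<Rightarrow>int. (\<forall>i\<in>I. (\<Sum>j\<in>S. z j * v j i) = 0) \<and> (\<exists>j\<in>S. z j \<noteq> 0)"
  using assms
proof (induction I arbitrary: S u v rule: finite_induct)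
  case empty
  then show ?case by (rule_tac x="\<lambda>_. 1" in exI) auto
next
  case (insert k I)
  show ?case
  proof (cases "\<forall>j\<in>S. v j k = 0")
    case True
    from insert.IH[of S u v] insert.prems obtain z where
      "\<forall>i\<in>I. (\<Sum>j\<in>S. z j * v j i) = 0" "\<exists>j\<in>S. z j \<noteq> 0" by auto
    then show ?thesis using True by (rule_tac x=z in exI) auto
  next
    case False
    then obtain j0 where j0: "j0 \<in> S" "v j0 k \<noteq> 0" by auto
    define a where "a = v j0 k"
    define S' where "S' = S - {j0}"
    define w where "w j i = a * v j i - v j k * v j0 i" for j i
    have fS': "finite S'" using insert.prems S'_def by auto
    have split: "(\<Sum>j\<in>S. f j) = f j0 + (\<Sum>j\<in>S'. f j)" for f :: "'a \<Rightarrow> 'c::comm_monoid_add"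
      unfolding S'_def using j0 insert.prems(1) by (simp add: sum.remove)
    have hk: "(\<Sum>j\<in>S'. u j * real_of_int (v j k)) = - u j0 * a"
      using insert.prems(2) split[of "\<lambda>j. u j * real_of_int (v j k)"] a_def by auto
    have hyp: "\<forall>i\<in>I. (\<Sum>j\<in>S'. u j * real_of_int (w j i)) = 0"
    proof
      fix i assume i: "i \<in> I"
      have hi: "(\<Sum>j\<in>S'. u j * real_of_int (v j i)) = - u j0 * v j0 i"
        using insert.prems(2) i split[of "\<lambda>j. u j * real_of_int (v j i)"] by auto
      have "(\<Sum>j\<in>S'. u j * real_of_int (w j i)) =
         a * (\<Sum>j\<in>S'. u j * real_of_int (v j i)) - v j0 i * (\<Sum>j\<in>S'. u j * real_of_int (v j k))"
        unfolding w_def by (simp add: sum_distrib_left sum_subtractf algebra_simps)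
      then show "(\<Sum>j\<in>S'. u j * real_of_int (w j i)) = 0" using hi hk by simp
    qed
    have nz: "\<exists>j\<in>S'. u j \<noteq> 0"
    proof (rule ccontr)
      assume "\<not> ?thesis"
      then have "(\<Sum>j\<in>S'. u j * real_of_int (v j k)) = 0" by auto
      with hk have "u j0 = 0" using j0 a_def by simp
      with \<open>\<not> ?thesis\<close> insert.prems(3) show False unfolding S'_def by auto
    qed
    from insert.IH[OF fS' hyp nz] obtain z' where
      z': "\<forall>i\<in>I. (\<Sum>j\<in>S'. z' j * w j i) = 0" "\<exists>j\<in>S'. z' j \<noteq> 0" by auto
    define z where "z j = (if j = j0 then - (\<Sum>j\<in>S'. z' j * v j k) else a * z' j)" for j
    have key: "(\<Sum>j\<in>S. z j * v j i) = (\<Sum>j\<in>S'. z' j * w j i)" for i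
    proof -
      have "(\<Sum>j\<in>S'. z j * v j i) = (\<Sum>j\<in>S'. a * z' j * v j i)"
        by (rule sum.cong) (auto simp: z_def S'_def)
      then have "(\<Sum>j\<in>S. z j * v j i) = - (\<Sum>j\<in>S'. z' j * v j k) * v j0 i + (\<Sum>j\<in>S'. a * z' j * v j i)"
        using split[of "\<lambda>j. z j * v j i"] by (simp add: z_def)
      also have "\<dots> = (\<Sum>j\<in>S'. z' j * w j i)"
        unfolding w_def by (simp add: sum_distrib_left sum_distrib_right sum_subtractf algebra_simps)
      finally show ?thesis .
    qed
    have wk: "w j k = 0" for j unfolding w_def a_def by simp
    show ?thesis
    proof (rule exI[of _ z], intro conjI ballI)
      fix i assume "i \<in> insert k I"
      then show "(\<Sum>j\<in>S. z j * v j i) = 0" using key z' wk by auto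
    next
      from z'(2) obtain j where "j \<in> S'" "z' j \<noteq> 0" by auto
      then show "\<exists>j\<in>S. z j \<noteq> 0" using j0 a_def unfolding z_def S'_def
        by (rule_tac x=j in bexI) auto
    qed
  qed
qed


lemma sum_mset_in:
  assumes "submonoid_nat M" "set_mset X \<subseteq> M" shows "sum_mset X \<in> M"
  using assms(2) proof (induction X)
  case empty then show ?case using assms(1) unfolding submonoid_nat_def by simp
next
  case (add x X) then show ?case using assms(1) unfolding submonoid_nat_def by auto
qed

lemma atomic:
  assumes "submonoid_nat M" "x \<in> M"
  shows "\<exists>X. set_mset X \<subseteq> atoms M \<and> sum_mset X = x"
  using assms(2)
proof (induction "\<Sum>i\<in>UNIV. x$i" arbitrary: x rule: less_induct)
  case less
  show ?case
  proof (cases "x = 0")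
    case True then show ?thesis by (rule_tac x="{#}" in exI) simp
  next
    case False
    show ?thesis
    proof (cases "x \<in> atoms M")
      case True then show ?thesis by (rule_tac x="{#x#}" in exI) simp
    next
      case False
      with \<open>x \<noteq> 0\<close> less.prems obtain b c where bc: "b \<in> M" "c \<in> M" "b \<noteq> 0" "c \<noteq> 0" "x = b + c"
        unfolding atoms_def by auto
      have pos: "(\<Sum>i\<in>UNIV. y$i) > 0" if "y \<noteq> (0::nat^'a)" for y
      proof -
        from that obtain i where "y$i \<noteq> 0" by (auto simp: vec_eq_iff)
        then show ?thesis by (meson finite gr0I sum_eq_0_iff UNIV_I)
      qed
      have sx: "(\<Sum>i\<in>UNIV. x$i) = (\<Sum>i\<in>UNIV. b$i) + (\<Sum>i\<in>UNIV. c$i)"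
        using bc(5) by (simp add: sum.distrib)
      obtain B where B: "set_mset B \<subseteq> atoms M" "sum_mset B = b"
        using less.hyps[OF _ bc(1)] sx pos[OF bc(4)] by force
      obtain C where C: "set_mset C \<subseteq> atoms M" "sum_mset C = c"
        using less.hyps[OF _ bc(2)] sx pos[OF bc(3)] by force
      show ?thesis using B C bc(5) by (rule_tac x="B+C" in exI) auto
    qed
  qed
qed

lemma sum_mset_comp:
  fixes X :: "(nat^'n::finite) multiset"
  assumes "finite A" "set_mset X \<subseteq> A"
  shows "sum_mset X $ i = (\<Sum>a\<in>A. count X a * a $ i)"
  using assms(2)
proof (induction X)
  case empty then show ?case by simp
next
  case (add x X)
  then have "x \<in> A" by auto
  have "(\<Sum>a\<in>A. count (add_mset x X) a * a $ i) = (\<Sum>a\<in>A. count X a * a $ i + (if a = x then a$i else 0))"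
    by (rule sum.cong) auto
  also have "\<dots> = (\<Sum>a\<in>A. count X a * a $ i) + x$i"
    using \<open>x \<in> A\<close> assms(1) by (simp add: sum.distrib)
  finally show ?case using add by simp
qed

lemma embR_add: "embR (x + y) = embR x + embR y"
  by (simp add: embR_def vec_eq_iff)

lemma embR_inj: "inj embR"
  by (auto simp: inj_def embR_def vec_eq_iff)

lemma embR_sum_mset:
  fixes X :: "(nat^'n::finite) multiset"
  assumes "finite A" "set_mset X \<subseteq> A"
  shows "embR (sum_mset X) = (\<Sum>a\<in>A. real (count X a) *\<^sub>R embR a)"
  using sum_mset_comp[OF assms] by (simp add: vec_eq_iff embR_def)


lemma real_cone_single: "v \<in> S \<Longrightarrow> 0 \<le> c \<Longrightarrow> c *\<^sub>R v \<in> real_cone S"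
  unfolding real_cone_def by (rule CollectI, rule exI[of _ "{v}"], rule exI[of _ "\<lambda>_. c"]) auto

lemma real_cone_sub: "S \<subseteq> real_cone S"
  using real_cone_single[of _ S 1] by auto

lemma real_cone_zero: "0 \<in> real_cone S"
  unfolding real_cone_def by (rule CollectI, rule exI[of _ "{}"]) auto

lemma real_cone_add:
  assumes "x \<in> real_cone S" "y \<in> real_cone S" shows "x + y \<in> real_cone S"
proof -
  from assms(1) obtain F1 c1 where 1: "finite F1" "F1 \<subseteq> S" "\<forall>x\<in>F1. 0 \<le> c1 x" "x = (\<Sum>x\<in>F1. c1 x *\<^sub>R x)"
    unfolding real_cone_def by auto
  from assms(2) obtain F2 c2 where 2: "finite F2" "F2 \<subseteq> S" "\<forall>x\<in>F2. 0 \<le> c2 x" "y = (\<Sum>x\<in>F2. c2 x *\<^sub>R x)"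
    unfolding real_cone_def by auto
  define c where "c z = (if z \<in> F1 then c1 z else 0) + (if z \<in> F2 then c2 z else 0)" for z
  have e1: "(\<Sum>z\<in>F1 \<union> F2. (if z \<in> F1 then c1 z *\<^sub>R z else 0)) = x"
    using sum.inter_restrict[of "F1 \<union> F2" "\<lambda>z. c1 z *\<^sub>R z" F1] 1 2 by (simp add: Int_absorb1)
  have e2: "(\<Sum>z\<in>F1 \<union> F2. (if z \<in> F2 then c2 z *\<^sub>R z else 0)) = y"
    using sum.inter_restrict[of "F1 \<union> F2" "\<lambda>z. c2 z *\<^sub>R z" F2] 1 2 by (simp add: Int_absorb1)
  have "(\<Sum>z\<in>F1 \<union> F2. c z *\<^sub>R z) = (\<Sum>z\<in>F1 \<union> F2. (if z \<in> F1 then c1 z *\<^sub>R z else 0) + (if z \<in> F2 then c2 z *\<^sub>R z else 0))"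
    by (rule sum.cong) (auto simp: c_def scaleR_add_left)
  also have "\<dots> = x + y" using e1 e2 by (simp add: sum.distrib)
  finally show ?thesis unfolding real_cone_def using 1 2
    by (intro CollectI exI[of _ "F1 \<union> F2"] exI[of _ c]) (auto simp: c_def)
qed

lemma real_cone_scale:
  assumes "x \<in> real_cone S" "0 \<le> a" shows "a *\<^sub>R x \<in> real_cone S"
proof -
  from assms(1) obtain F1 c1 where 1: "finite F1" "F1 \<subseteq> S" "\<forall>x\<in>F1. 0 \<le> c1 x" "x = (\<Sum>x\<in>F1. c1 x *\<^sub>R x)"
    unfolding real_cone_def by auto
  then show ?thesis unfolding real_cone_def using assms(2)
    by (intro CollectI exI[of _ F1] exI[of _ "\<lambda>z. a * c1 z"]) (auto simp: scaleR_sum_right)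
qed

lemma real_cone_idem: "real_cone (real_cone S) = real_cone S"
proof
  show "real_cone S \<subseteq> real_cone (real_cone S)" by (rule real_cone_sub)
next
  show "real_cone (real_cone S) \<subseteq> real_cone S"
  proof
    fix y assume "y \<in> real_cone (real_cone S)"
    then obtain F c where F: "finite F" "F \<subseteq> real_cone S" "\<forall>x\<in>F. 0 \<le> c x" "y = (\<Sum>x\<in>F. c x *\<^sub>R x)"
      unfolding real_cone_def by auto
    have "F \<subseteq> real_cone S \<longrightarrow> (\<forall>x\<in>F. 0 \<le> c x) \<longrightarrow> (\<Sum>x\<in>F. c x *\<^sub>R x) \<in> real_cone S"
      using F(1) by (induction F rule: finite_induct)
        (auto simp: real_cone_zero intro!: real_cone_add real_cone_scale)
    then show "y \<in> real_cone S" using F by auto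
  qed
qed

lemma face_scale: "face_of_cone F C \<Longrightarrow> v \<in> F \<Longrightarrow> 0 \<le> c \<Longrightarrow> c *\<^sub>R v \<in> F"
  unfolding face_of_cone_def using real_cone_single[of v F c] by auto


lemma divisor_closed:
  assumes F: "face_of_cone F (monoid_cone M)" and b: "b \<in> M" and c: "c \<in> M"
    and bc: "embR (b + c) \<in> F"
  shows "embR b \<in> F"
proof -
  have x: "2 *\<^sub>R embR b \<in> monoid_cone M" "2 *\<^sub>R embR c \<in> monoid_cone M"
    unfolding monoid_cone_def using b c by (auto intro!: real_cone_single)
  have "(1/2::real) *\<^sub>R (2 *\<^sub>R embR b) + (1 - 1/2) *\<^sub>R (2 *\<^sub>R embR c) \<in> F"
    using bc by (simp add: embR_add)
  then have "\<exists>t. 0 < t \<and> t < 1 \<and> t *\<^sub>R (2 *\<^sub>R embR b) + (1 - t) *\<^sub>R (2 *\<^sub>R embR c) \<in> F"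
    by (intro exI[of _ "1/2"]) simp
  then have "2 *\<^sub>R embR b \<in> F" using F x unfolding face_of_cone_def by blast
  from face_scale[OF F this, of "1/2"] show ?thesis by simp
qed

lemma UFM_face:
  assumes sm: "submonoid_nat M" and U: "is_UFM M" and F: "face_of_cone F (monoid_cone M)"
  defines "N \<equiv> {m \<in> M. embR m \<in> F}"
  shows "is_UFM N"
proof -
  have dc: "b \<in> N" if "b \<in> M" "c \<in> M" "b + c \<in> N" for b c
    using divisor_closed[OF F that(1,2)] that unfolding N_def by auto
  have aN: "atoms N \<subseteq> atoms M"
  proof
    fix a assume a: "a \<in> atoms N"
    then have "a \<in> M" "a \<noteq> 0" unfolding atoms_def N_def by auto
    moreover have "\<not> (\<exists>b\<in>M. \<exists>c\<in>M. b \<noteq> 0 \<and> c \<noteq> 0 \<and> a = b + c)"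
    proof
      assume "\<exists>b\<in>M. \<exists>c\<in>M. b \<noteq> 0 \<and> c \<noteq> 0 \<and> a = b + c"
      then obtain b c where "b \<in> M" "c \<in> M" "b \<noteq> 0" "c \<noteq> 0" "a = b + c" by auto
      moreover have "a \<in> N" using a unfolding atoms_def by auto
      ultimately have "b \<in> N" "c \<in> N" using dc[of b c] dc[of c b] by (auto simp: add.commute)
      with a \<open>b \<noteq> 0\<close> \<open>c \<noteq> 0\<close> \<open>a = b + c\<close> show False unfolding atoms_def by auto
    qed
    ultimately show "a \<in> atoms M" unfolding atoms_def by auto
  qed
  show ?thesis unfolding is_UFM_def
  proof
    fix x assume x: "x \<in> N"
    then have xM: "x \<in> M" unfolding N_def by auto
    from U xM have "\<exists>!A. set_mset A \<subseteq> atoms M \<and> sum_mset A = x" unfolding is_UFM_def by blast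
    then obtain X where X: "set_mset X \<subseteq> atoms M" "sum_mset X = x"
      and uq: "\<And>Y. set_mset Y \<subseteq> atoms M \<Longrightarrow> sum_mset Y = x \<Longrightarrow> Y = X"
      by (elim ex1E) blast
    have "set_mset X \<subseteq> atoms N"
    proof
      fix a assume a: "a \<in> set_mset X"
      then have aM: "a \<in> atoms M" using X by auto
      have "x = a + sum_mset (X - {#a#})" using X(2) a
        by (simp add: sum_mset.remove)
      moreover have "set_mset (X - {#a#}) \<subseteq> M"
        using X(1) unfolding atoms_def by (auto dest: in_diffD)
      then have "sum_mset (X - {#a#}) \<in> M" by (rule sum_mset_in[OF sm])
      moreover have "a \<in> M" using aM unfolding atoms_def by auto
      ultimately have "a \<in> N" using dc[of a "sum_mset (X - {#a#})"] x by simp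
      with aM show "a \<in> atoms N" unfolding atoms_def N_def by auto
    qed
    then show "\<exists>!A. set_mset A \<subseteq> atoms N \<and> sum_mset A = x"
      using X uq aN by blast
  qed
qed

lemma self_face:
  "M \<in> face_submonoids M"
proof -
  have "face_of_cone (monoid_cone M) (monoid_cone M)"
    unfolding face_of_cone_def monoid_cone_def by (simp add: real_cone_idem)
  moreover have "M = {m \<in> M. embR m \<in> monoid_cone M}"
    unfolding monoid_cone_def using real_cone_sub[of "embR ` M"] by auto
  ultimately show ?thesis unfolding face_submonoids_def by blast
qed


lemma embR_sum_mset_span:
  "set_mset X \<subseteq> A \<Longrightarrow> embR (sum_mset X) \<in> span (embR ` A)"
proof (induction X)
  case empty
  have "embR 0 = (0::real^'a)" by (simp add: embR_def vec_eq_iff)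
  then show ?case by (simp add: span_zero)
next
  case (add x X)
  have "embR x \<in> span (embR ` A)" using add.prems by (auto intro: span_base)
  with add show ?case by (simp add: embR_add span_add)
qed

lemma cone_span:
  assumes sm: "submonoid_nat M"
  shows "span (monoid_cone M) = span (embR ` atoms M)"
proof
  have "embR ` atoms M \<subseteq> monoid_cone M"
    unfolding monoid_cone_def using real_cone_sub[of "embR ` M"] unfolding atoms_def by auto
  then show "span (embR ` atoms M) \<subseteq> span (monoid_cone M)" by (rule span_mono)
next
  have M: "embR m \<in> span (embR ` atoms M)" if "m \<in> M" for m
    using atomic[OF sm that] embR_sum_mset_span by metis
  have "monoid_cone M \<subseteq> span (embR ` atoms M)"
  proof
    fix y assume "y \<in> monoid_cone M"
    then obtain F c where F: "finite F" "F \<subseteq> embR ` M" "y = (\<Sum>x\<in>F. c x *\<^sub>R x)"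
      unfolding monoid_cone_def real_cone_def by auto
    then show "y \<in> span (embR ` atoms M)" using M by (auto intro!: span_sum span_scale)
  qed
  then show "span (monoid_cone M) \<subseteq> span (embR ` atoms M)" by (rule span_minimal) simp
qed

lemma UFM_indep:
  fixes M :: "(nat^'n::finite) set"
  assumes sm: "submonoid_nat M" and U: "is_UFM M"
  shows "independent (embR ` atoms M)"
proof
  assume "dependent (embR ` atoms M)"
  then obtain T u where T: "finite T" "T \<subseteq> embR ` atoms M" "(\<Sum>v\<in>T. u v *\<^sub>R v) = 0" "\<exists>v\<in>T. u v \<noteq> 0"
    unfolding dependent_explicit by auto
  define S where "S = {a \<in> atoms M. embR a \<in> T}"
  have TS: "T = embR ` S" using T(2) unfolding S_def by auto
  have inj: "inj_on embR S" using inj_on_subset[OF embR_inj subset_UNIV] .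
  have fS: "finite S" using T(1) TS inj finite_imageD by blast
  have SA: "S \<subseteq> atoms M" unfolding S_def by auto
  have sumS: "(\<Sum>a\<in>S. u (embR a) *\<^sub>R embR a) = 0"
    using T(3) unfolding TS by (simp add: sum.reindex[OF inj])
  have hyp: "\<forall>i\<in>UNIV. (\<Sum>a\<in>S. u (embR a) * real_of_int (int (a$i))) = 0"
  proof
    fix i :: 'n
    have "(\<Sum>a\<in>S. u (embR a) *\<^sub>R embR a) $ i = 0" using sumS by simp
    then show "(\<Sum>a\<in>S. u (embR a) * real_of_int (int (a$i))) = 0" by (simp add: embR_def)
  qed
  have nz: "\<exists>a\<in>S. u (embR a) \<noteq> 0" using T(4) unfolding TS by auto
  obtain z :: "(nat^'n) \<Rightarrow> int" where z: "\<forall>i\<in>UNIV. (\<Sum>a\<in>S. z a * int (a$i)) = 0" "\<exists>a\<in>S. z a \<noteq> 0"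
    using int_dep[OF _ fS hyp nz] by auto
  define fP where "fP a = (if a \<in> S then nat (z a) else 0)" for a
  define fQ where "fQ a = (if a \<in> S then nat (- z a) else 0)" for a
  have "finite {a. 0 < fP a}" "finite {a. 0 < fQ a}"
    using fS unfolding fP_def fQ_def by (auto intro: finite_subset[OF _ fS])
  then have cP: "count (Abs_multiset fP) = fP" and cQ: "count (Abs_multiset fQ) = fQ"
    by (auto simp: count_Abs_multiset)
  define P where "P = Abs_multiset fP"
  define Q where "Q = Abs_multiset fQ"
  have sP: "set_mset P \<subseteq> S" "set_mset Q \<subseteq> S"
    unfolding P_def Q_def set_mset_def cP cQ fP_def fQ_def by auto
  have eq: "sum_mset P = sum_mset Q"
  proof (subst vec_eq_iff, intro allI)
    fix i
    have "int (sum_mset P $ i) = (\<Sum>a\<in>S. int (count P a) * int (a$i))"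
      using sum_mset_comp[OF fS sP(1), of i] by simp
    also have "\<dots> = (\<Sum>a\<in>S. int (nat (z a)) * int (a$i))"
      by (rule sum.cong) (auto simp: P_def cP fP_def)
    finally have 1: "int (sum_mset P $ i) = (\<Sum>a\<in>S. int (nat (z a)) * int (a$i))" .
    have "int (sum_mset Q $ i) = (\<Sum>a\<in>S. int (count Q a) * int (a$i))"
      using sum_mset_comp[OF fS sP(2), of i] by simp
    also have "\<dots> = (\<Sum>a\<in>S. int (nat (- z a)) * int (a$i))"
      by (rule sum.cong) (auto simp: Q_def cQ fQ_def)
    finally have 2: "int (sum_mset Q $ i) = (\<Sum>a\<in>S. int (nat (- z a)) * int (a$i))" .
    note 1 2
    moreover have "(\<Sum>a\<in>S. int (nat (z a)) * int (a$i)) - (\<Sum>a\<in>S. int (nat (- z a)) * int (a$i))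
        = (\<Sum>a\<in>S. z a * int (a$i))"
      unfolding sum_subtractf[symmetric] by (rule sum.cong) (auto simp: algebra_simps)
    ultimately have "int (sum_mset P $ i) = int (sum_mset Q $ i)" using z(1) by auto
    then show "sum_mset P $ i = sum_mset Q $ i" by simp
  qed
  have "atoms M \<subseteq> M" unfolding atoms_def by auto
  then have xM: "sum_mset P \<in> M" using sP(1) SA sum_mset_in[OF sm] by blast
  from U xM have "\<exists>!A. set_mset A \<subseteq> atoms M \<and> sum_mset A = sum_mset P" unfolding is_UFM_def by blast
  then obtain W where W: "\<And>Y. set_mset Y \<subseteq> atoms M \<Longrightarrow> sum_mset Y = sum_mset P \<Longrightarrow> Y = W"
    by (elim ex1E) blast
  have PA: "set_mset P \<subseteq> atoms M" and QA: "set_mset Q \<subseteq> atoms M" using sP SA by auto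
  have "P = W" using W[OF PA] by simp
  moreover have "Q = W" using W[OF QA] eq by simp
  ultimately have "P = Q" by simp
  moreover from z(2) obtain a where "a \<in> S" "z a \<noteq> 0" by auto
  then have "count P a \<noteq> count Q a" unfolding P_def Q_def cP cQ fP_def fQ_def by auto
  ultimately show False by simp
qed

lemma indep_UFM:
  assumes sm: "submonoid_nat M" and fA: "finite (atoms M)" and I: "independent (embR ` atoms M)"
  shows "is_UFM M"
  unfolding is_UFM_def
proof
  fix x assume x: "x \<in> M"
  obtain X where X: "set_mset X \<subseteq> atoms M" "sum_mset X = x" using atomic[OF sm x] by auto
  have inj: "inj_on embR (atoms M)" using inj_on_subset[OF embR_inj subset_UNIV] .
  have uq: "Y = X" if Y: "set_mset Y \<subseteq> atoms M" "sum_mset Y = x" for Y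
  proof -
    define c where "c v = real (count Y (inv embR v)) - real (count X (inv embR v))" for v
    have "(\<Sum>v\<in>embR ` atoms M. c v *\<^sub>R v) = (\<Sum>a\<in>atoms M. c (embR a) *\<^sub>R embR a)"
      by (simp add: sum.reindex[OF inj])
    also have "\<dots> = (\<Sum>a\<in>atoms M. real (count Y a) *\<^sub>R embR a) - (\<Sum>a\<in>atoms M. real (count X a) *\<^sub>R embR a)"
      unfolding sum_subtractf[symmetric] c_def inv_f_f[OF embR_inj] by (simp add: scaleR_diff_left)
    also have "\<dots> = 0"
      using embR_sum_mset[OF fA X(1)] embR_sum_mset[OF fA Y(1)] X(2) Y(2) by simp
    finally have "\<forall>v\<in>embR ` atoms M. c v = 0"
      using I unfolding independent_explicit by blast
    then have "count Y a = count X a" if "a \<in> atoms M" for a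
    proof -
      have "c (embR a) = 0" using that \<open>\<forall>v\<in>embR ` atoms M. c v = 0\<close> by blast
      then show ?thesis unfolding c_def inv_f_f[OF embR_inj] by simp
    qed
    moreover have "count Y a = count X a" if "a \<notin> atoms M" for a
      using that X(1) Y(1) by (metis count_inI in_mono)
    ultimately show ?thesis by (metis multiset_eqI)
  qed
  show "\<exists>!A. set_mset A \<subseteq> atoms M \<and> sum_mset A = x" using X uq by blast
qed


theorem mainTheorem7:
  fixes M :: "(nat^'n::finite) set"
  assumes "submonoid_nat M"
  shows "(is_UFM M \<longleftrightarrow> (\<forall>N\<in>face_submonoids M. is_UFM N))
       \<and> (is_UFM M \<longleftrightarrow> (finite (atoms M) \<and> card (atoms M) = dim (monoid_cone M)))"
proof
  show "is_UFM M \<longleftrightarrow> (\<forall>N\<in>face_submonoids M. is_UFM N)"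
  proof
    assume U: "is_UFM M"
    show "\<forall>N\<in>face_submonoids M. is_UFM N"
      unfolding face_submonoids_def using UFM_face[OF assms U] by blast
  next
    assume "\<forall>N\<in>face_submonoids M. is_UFM N"
    then show "is_UFM M" using self_face[of M] by blast
  qed
next
  have inj: "inj_on embR (atoms M)" using inj_on_subset[OF embR_inj subset_UNIV] .
  have cardE: "card (embR ` atoms M) = card (atoms M)" by (rule card_image[OF inj])
  have dimE: "dim (monoid_cone M) = dim (embR ` atoms M)"
    by (metis cone_span[OF assms] dim_span)
  show "is_UFM M \<longleftrightarrow> (finite (atoms M) \<and> card (atoms M) = dim (monoid_cone M))"
  proof
    assume U: "is_UFM M"
    have I: "independent (embR ` atoms M)" by (rule UFM_indep[OF assms U])
    then have "finite (embR ` atoms M)" using independent_bound_general by blast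
    then have "finite (atoms M)" using finite_imageD[OF _ inj] by blast
    moreover have "card (atoms M) = dim (monoid_cone M)"
      using dim_eq_card_independent[OF I] cardE dimE by simp
    ultimately show "finite (atoms M) \<and> card (atoms M) = dim (monoid_cone M)" by simp
  next
    assume c: "finite (atoms M) \<and> card (atoms M) = dim (monoid_cone M)"
    have "independent (embR ` atoms M)"
      using card_eq_dim[of "embR ` atoms M" "embR ` atoms M"] c cardE dimE
      by (simp add: span_superset)
    then show "is_UFM M" using indep_UFM[OF assms] c by blast
  qed
qed

end
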